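(* Let $d\ge3$ and $d^2-d+2\le g\le d^2-1$, and let $A\in SM_d(\mathbb C)^g$ be such that $\mathcal D_A$ is bounded. Then the convex set $\mathcal D_A(1)\subseteq\mathbb R^g$ is not self-dual, i.e. $\mathcal D_A(1)\ne\{x\in\mathbb R^g:\sum_ix_iy_i\le1\ \forall y\in\mathcal D_A(1)\}$. Consequently $\mathcal D_A$ is not self-dual: $\mathcal D_A\neq\mathcal D_A^\circ$.
   Context: $SM_d(\mathbb C)^g$ denotes $g$-tuples of self-adjoint $d\times d$ complex matrices. $\mathcal D_A=\bigcup_n\mathcal D_A(n)$ with $\mathcal D_A(n)=\{X\in SM_n(\mathbb C)^g: I-\sum_iA_i\otimes X_i\succeq0\}$, so $\mathcal D_A(1)=\{x\in\mathbb R^g:I-\sum_ix_iA_i\succeq0\}$. The free polar dual of a matrix convex set $K$ is $K^\circ=\{X\in SM^g:\sum_iY_i\otimes X_i\preceq I\ \forall Y\in K\}$. *)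

theory Defs
  imports "HOL-Analysis.Analysis" "Jordan_Normal_Form.Matrix"
begin

definition hermitian :: "complex mat \<Rightarrow> bool" where
  "hermitian M \<longleftrightarrow> dim_row M = dim_col M \<and>
     (\<forall>i<dim_row M. \<forall>j<dim_row M. M $$ (i,j) = cnj (M $$ (j,i)))"

definition psd :: "complex mat \<Rightarrow> bool" where
  "psd M \<longleftrightarrow> hermitian M \<and>
     (\<forall>v :: nat \<Rightarrow> complex. 0 \<le> Re (\<Sum>i<dim_row M. \<Sum>j<dim_row M. cnj (v i) * M $$ (i,j) * v j))"

definition SM :: "nat \<Rightarrow> nat \<Rightarrow> complex mat list \<Rightarrow> bool" where
  "SM n g X \<longleftrightarrow> length X = g \<and> (\<forall>i<g. X ! i \<in> carrier_mat n n \<and> hermitian (X ! i))"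

definition kron :: "complex mat \<Rightarrow> complex mat \<Rightarrow> complex mat" where
  "kron A B = mat (dim_row A * dim_row B) (dim_col A * dim_col B)
     (\<lambda>(i,j). A $$ (i div dim_row B, j div dim_col B) * B $$ (i mod dim_row B, j mod dim_col B))"

definition pencil :: "complex mat list \<Rightarrow> complex mat list \<Rightarrow> complex mat" where
  "pencil A X = (let N = dim_row (A ! 0) * dim_row (X ! 0) in
     mat N N (\<lambda>(r,c). (if r = c then 1 else 0) - (\<Sum>i<length A. kron (A ! i) (X ! i) $$ (r,c))))"

(* free spectrahedron D_A, as set of pairs (level n, tuple X) with n \<ge> 1 *)
definition free_spec :: "complex mat list \<Rightarrow> (nat \<times> complex mat list) set" where
  "free_spec A = {(n, X). n \<ge> 1 \<and> SM n (length A) X \<and> psd (pencil A X)}"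

definition free_polar :: "nat \<Rightarrow> (nat \<times> complex mat list) set \<Rightarrow> (nat \<times> complex mat list) set" where
  "free_polar g K = {(n, X). n \<ge> 1 \<and> SM n g X \<and> (\<forall>(m, Y) \<in> K. psd (pencil Y X))}"

definition opnorm_le :: "complex mat \<Rightarrow> real \<Rightarrow> bool" where
  "opnorm_le M C \<longleftrightarrow> 0 \<le> C \<and> (\<forall>v :: nat \<Rightarrow> complex.
     (\<Sum>j<dim_row M. (cmod (\<Sum>k<dim_col M. M $$ (j,k) * v k))\<^sup>2) \<le> C\<^sup>2 * (\<Sum>k<dim_col M. (cmod (v k))\<^sup>2))"

definition free_bounded :: "(nat \<times> complex mat list) set \<Rightarrow> bool" where
  "free_bounded K \<longleftrightarrow> (\<exists>C. \<forall>(n, X) \<in> K. \<forall>i<length X. opnorm_le (X ! i) C)"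

definition spec1 :: "complex mat list \<Rightarrow> real list set" where
  "spec1 A = {x. length x = length A \<and>
     psd (mat (dim_row (A ! 0)) (dim_row (A ! 0)) (\<lambda>(r,c). (if r = c then 1 else 0)
            - (\<Sum>i<length A. complex_of_real (x ! i) * A ! i $$ (r,c))))}"

definition polar_R :: "nat \<Rightarrow> real list set \<Rightarrow> real list set" where
  "polar_R g K = {x. length x = g \<and> (\<forall>y \<in> K. (\<Sum>i<g. x ! i * y ! i) \<le> 1)}"

end

theory Submission
  imports Defs
begin

lemma unif_eps:
  fixes f :: "nat \<Rightarrow> real"
  shows "(\<forall>r<d. f r < 1) \<Longrightarrow> \<exists>e>0. \<forall>r<d. (1+e) * f r \<le> 1"
proof (induction d)
  case 0
  then show ?case by (intro exI[of _ 1]) auto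
next
  case (Suc d)
  then obtain e1 where e1: "e1 > 0" "\<forall>r<d. (1+e1) * f r \<le> 1" by auto
  define e2 where "e2 = (1 - f d) / (\<bar>f d\<bar> + 1)"
  have fd: "f d < 1" using Suc.prems by auto
  have e2p: "e2 > 0" unfolding e2_def using fd by (simp add: divide_pos_pos)
  have e2b: "(1+e2) * f d \<le> 1"
  proof (cases "f d \<le> 0")
    case True have "e2 * f d \<le> 0" using e2p True by (simp add: mult_nonneg_nonpos)
    then show ?thesis using True by (simp add: algebra_simps)
  next
    case False
    then have "e2 * f d \<le> 1 - f d" unfolding e2_def using fd
      by (simp add: field_simps)
    then show ?thesis by (simp add: algebra_simps)
  qed
  have mono: "(1 + min e1 e2) * f r \<le> 1" if "(1+e) * f r \<le> 1" "min e1 e2 \<le> e" "e > 0" "min e1 e2 > 0" for r e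
  proof (cases "f r \<ge> 0")
    case True then show ?thesis using that by (smt (verit) mult_right_mono)
  next
    case False then show ?thesis using that by (smt (verit) mult_pos_neg)
  qed
  show ?case
    apply (intro exI[of _ "min e1 e2"])
    using e1 e2p e2b mono less_Suc_eq by (auto)
qed

lemma circle_false:
  fixes a b :: "nat \<Rightarrow> real"
  assumes H: "\<And>s t. (\<forall>r<d. s * a r + t * b r \<le> 1) \<longleftrightarrow> s\<^sup>2 + t\<^sup>2 \<le> 1"
  shows False
proof -
  have ab: "(a r)\<^sup>2 + (b r)\<^sup>2 \<le> 1" if "r < d" for r
  proof (rule ccontr)
    assume "\<not> ?thesis"
    then have g1: "(a r)\<^sup>2 + (b r)\<^sup>2 > 1" by simp
    define \<rho> where "\<rho> = sqrt ((a r)\<^sup>2 + (b r)\<^sup>2)"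
    have rho: "\<rho> > 1" "\<rho>\<^sup>2 = (a r)\<^sup>2 + (b r)\<^sup>2" using g1 unfolding \<rho>_def by (auto simp: real_less_rsqrt)
    have "(a r / \<rho>)\<^sup>2 + (b r / \<rho>)\<^sup>2 \<le> 1" using rho by (simp add: power_divide add_divide_distrib[symmetric])
    then have "a r / \<rho> * a r + b r / \<rho> * b r \<le> 1" using H that by blast
    moreover have "a r / \<rho> * a r + b r / \<rho> * b r = \<rho>" using rho
      by (simp add: power2_eq_square add_divide_distrib[symmetric]) (metis nonzero_mult_div_cancel_left not_one_less_zero order_less_trans power2_eq_square)
    ultimately show False using rho by simp
  qed
  have cov: "s \<in> a ` {..<d}" if s: "0 \<le> s" "s \<le> 1" for s
  proof -
    define t where "t = sqrt (1 - s\<^sup>2)"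
    have st: "s\<^sup>2 + t\<^sup>2 = 1" unfolding t_def using s by (simp add: power_le_one)
    have "\<exists>r<d. s * a r + t * b r \<ge> 1"
    proof (rule ccontr)
      assume "\<not> ?thesis"
      then have "\<forall>r<d. s * a r + t * b r < 1" by auto
      from unif_eps[OF this] obtain e where e: "e > 0" "\<forall>r<d. (1+e) * (s * a r + t * b r) \<le> 1" by auto
      then have "\<forall>r<d. ((1 + e) * s) * a r + ((1 + e) * t) * b r \<le> 1" by (simp add: algebra_simps)
      then have "((1 + e) * s)\<^sup>2 + ((1 + e) * t)\<^sup>2 \<le> 1" using H by blast
      moreover have "(1+e)\<^sup>2 * (s\<^sup>2 + t\<^sup>2) = ((1 + e) * s)\<^sup>2 + ((1 + e) * t)\<^sup>2" by (simp add: power2_eq_square algebra_simps)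
      ultimately have "(1+e)\<^sup>2 * (s\<^sup>2 + t\<^sup>2) \<le> 1" by linarith
      then have "(1+e)\<^sup>2 \<le> 1" using st by simp
      moreover have "(1+e)\<^sup>2 > 1"
      proof -
        have "(1+e)\<^sup>2 = 1 + (2*e + e*e)" by (simp add: power2_eq_square algebra_simps)
        moreover have "2*e + e*e > 0" using e by (simp add: add_pos_pos)
        ultimately show ?thesis by linarith
      qed
      ultimately show False by simp
    qed
    then obtain r where r: "r < d" "s * a r + t * b r \<ge> 1" by auto
    have "(a r - s)\<^sup>2 + (b r - t)\<^sup>2 = ((a r)\<^sup>2 + (b r)\<^sup>2) - 2 * (s * a r + t * b r) + (s\<^sup>2 + t\<^sup>2)"
      by (simp add: power2_eq_square algebra_simps)
    also have "\<dots> \<le> 0" using ab[OF r(1)] r(2) st by simp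
    finally have "(a r - s)\<^sup>2 \<le> 0" by (smt (verit) zero_le_power2)
    then have "a r = s" by simp
    then show ?thesis using r by auto
  qed
  then have "{0..1::real} \<subseteq> a ` {..<d}" by auto
  then have "finite {0..1::real}" by (rule finite_subset) auto
  then show False using infinite_Icc[of "0::real" 1] by simp
qed

lemma kernel_exists:
  fixes c :: "'j \<Rightarrow> nat \<Rightarrow> real"
  assumes "finite J" "finite I" "card J < card I"
  shows "\<exists>x. (\<forall>i. i \<notin> I \<longrightarrow> x i = 0) \<and> (\<exists>i\<in>I. x i \<noteq> 0) \<and> (\<forall>j\<in>J. (\<Sum>i\<in>I. c j i * x i) = 0)"
  using assms
proof (induction J arbitrary: I c rule: finite_induct)
  case empty
  then obtain k where k: "k \<in> I" by fastforce
  show ?case by (rule exI[of _ "\<lambda>i. if i = k then 1 else 0"]) (use k in auto)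
next
  case (insert j0 J)
  have cJ: "card J < card I" using insert by simp
  show ?case
  proof (cases "\<forall>i\<in>I. c j0 i = 0")
    case True
    from insert.IH[OF insert.prems(1) cJ] obtain x where x:
      "\<forall>i. i \<notin> I \<longrightarrow> x i = 0" "\<exists>i\<in>I. x i \<noteq> 0" "\<forall>j\<in>J. (\<Sum>i\<in>I. c j i * x i) = 0" by blast
    show ?thesis using x True by (intro exI[of _ x]) auto
  next
    case False
    then obtain k where k: "k \<in> I" "c j0 k \<noteq> 0" by auto
    define I' where "I' = I - {k}"
    define c' where "c' = (\<lambda>j i. c j i - c j k / c j0 k * c j0 i)"
    have fI': "finite I'" using insert.prems unfolding I'_def by auto
    have cI': "card J < card I'" unfolding I'_def using insert.prems insert.hyps k by simp
    from insert.IH[OF fI' cI', of c'] obtain x' where x':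
      "\<forall>i. i \<notin> I' \<longrightarrow> x' i = 0" "\<exists>i\<in>I'. x' i \<noteq> 0" "\<forall>j\<in>J. (\<Sum>i\<in>I'. c' j i * x' i) = 0" by blast
    define xk where "xk = - (\<Sum>i\<in>I'. c j0 i * x' i) / c j0 k"
    define x where "x = x'(k := xk)"
    have sumsplit: "(\<Sum>i\<in>I. f i * x i) = f k * xk + (\<Sum>i\<in>I'. f i * x' i)" for f
    proof -
      have "(\<Sum>i\<in>I. f i * x i) = f k * x k + (\<Sum>i\<in>I'. f i * x i)"
        unfolding I'_def using k insert.prems(1) by (simp add: sum.remove)
      also have "(\<Sum>i\<in>I'. f i * x i) = (\<Sum>i\<in>I'. f i * x' i)"
        by (rule sum.cong) (auto simp: x_def I'_def)
      finally show ?thesis by (simp add: x_def)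
    qed
    have "\<forall>i. i \<notin> I \<longrightarrow> x i = 0" using x' k unfolding x_def I'_def by auto
    moreover have "\<exists>i\<in>I. x i \<noteq> 0" using x'(2) k unfolding x_def I'_def by auto
    moreover have "(\<Sum>i\<in>I. c j i * x i) = 0" if j: "j \<in> insert j0 J" for j
    proof (cases "j = j0")
      case True
      then show ?thesis using k by (simp add: sumsplit xk_def)
    next
      case False
      then have jJ: "j \<in> J" using j by auto
      have "(\<Sum>i\<in>I'. c j i * x' i) = (\<Sum>i\<in>I'. c' j i * x' i + c j k / c j0 k * (c j0 i * x' i))"
        by (rule sum.cong) (auto simp: c'_def algebra_simps)
      also have "\<dots> = c j k / c j0 k * (\<Sum>i\<in>I'. c j0 i * x' i)"
        using x'(3) jJ by (simp add: sum.distrib sum_distrib_left)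
      finally have eq: "(\<Sum>i\<in>I'. c j i * x' i) = c j k / c j0 k * (\<Sum>i\<in>I'. c j0 i * x' i)" .
      have "(\<Sum>i\<in>I. c j i * x i) = c j k * xk + c j k / c j0 k * (\<Sum>i\<in>I'. c j0 i * x' i)"
        using sumsplit[of "c j"] eq by simp
      then show ?thesis using k by (simp add: xk_def)
    qed
    ultimately show ?thesis by blast
  qed
qed


lemma herm_entry:
  assumes "SM d g A" "i < g" "r < d" "c < d"
  shows "A ! i $$ (r,c) = cnj (A ! i $$ (c,r))"
  using assms unfolding SM_def hermitian_def by auto

lemma herm_diag_real:
  assumes "SM d g A" "i < g" "r < d"
  shows "A ! i $$ (r,r) = complex_of_real (Re (A ! i $$ (r,r)))"
proof -
  have "A ! i $$ (r,r) = cnj (A ! i $$ (r,r))" using herm_entry[OF assms(1,2,3,3)] .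
  then have "Im (A ! i $$ (r,r)) = - Im (A ! i $$ (r,r))" by (metis cnj.sel(2))
  then have "Im (A ! i $$ (r,r)) = 0" by simp
  then show ?thesis by (simp add: complex_eq_iff)
qed

lemma diag_psd:
  fixes e :: "nat \<Rightarrow> real"
  shows "psd (mat d d (\<lambda>(r,c). if r = c then complex_of_real (e r) else 0)) \<longleftrightarrow> (\<forall>r<d. 0 \<le> e r)"
proof -
  let ?M = "mat d d (\<lambda>(r,c). if r = c then complex_of_real (e r) else 0)"
  have herm: "hermitian ?M" unfolding hermitian_def by auto
  have qf: "(\<Sum>i<dim_row ?M. \<Sum>j<dim_row ?M. cnj (v i) * ?M $$ (i,j) * v j) = (\<Sum>i<d. complex_of_real (e i * (cmod (v i))\<^sup>2))" for v
  proof -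
    have "(\<Sum>i<dim_row ?M. \<Sum>j<dim_row ?M. cnj (v i) * ?M $$ (i,j) * v j) = (\<Sum>i<d. \<Sum>j<d. if i = j then cnj (v i) * complex_of_real (e i) * v i else 0)"
      by (intro sum.cong refl) auto
    also have "\<dots> = (\<Sum>i<d. cnj (v i) * complex_of_real (e i) * v i)" by (simp add: sum.delta)
    also have "\<dots> = (\<Sum>i<d. complex_of_real (e i * (cmod (v i))\<^sup>2))"
    proof (intro sum.cong refl)
      fix i
      have "cnj (v i) * complex_of_real (e i) * v i = complex_of_real (e i) * (v i * cnj (v i))" by (simp add: algebra_simps)
      also have "\<dots> = complex_of_real (e i) * complex_of_real ((cmod (v i))\<^sup>2)" by (simp only: complex_norm_square)
      finally show "cnj (v i) * complex_of_real (e i) * v i = complex_of_real (e i * (cmod (v i))\<^sup>2)" by simp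
    qed
    finally show ?thesis .
  qed
  show ?thesis
  proof
    assume p: "psd ?M"
    show "\<forall>r<d. 0 \<le> e r"
    proof (intro allI impI)
      fix r assume r: "r < d"
      define w where "w = (\<lambda>i::nat. if i = r then (1::complex) else 0)"
      from p have "0 \<le> Re (\<Sum>i<dim_row ?M. \<Sum>j<dim_row ?M. cnj (w i) * ?M $$ (i,j) * w j)"
        unfolding psd_def by blast
      then have "0 \<le> Re (\<Sum>i<d. complex_of_real (e i * (cmod (w i))\<^sup>2))" by (simp only: qf)
      also have "(\<Sum>i<d. complex_of_real (e i * (cmod (w i))\<^sup>2)) = (\<Sum>i<d. if i = r then complex_of_real (e r) else 0)"
        by (intro sum.cong refl) (simp add: w_def)
      also have "\<dots> = complex_of_real (e r)" using r by (simp add: sum.delta)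
      finally show "0 \<le> e r" by simp
    qed
  next
    assume "\<forall>r<d. 0 \<le> e r"
    then have "0 \<le> Re (\<Sum>i<d. complex_of_real (e i * (cmod (v i))\<^sup>2))" for v
      by (simp, intro sum_nonneg) simp
    then show "psd ?M" unfolding psd_def using herm qf by simp
  qed
qed

lemma card_pairs: "card {(r,c). r < c \<and> c < (d::nat)} * 2 = d * (d - 1)"
proof (induction d)
  case 0 then show ?case by simp
next
  case (Suc d)
  have eq: "{(r,c). r < c \<and> c < Suc d} = {(r,c). r < c \<and> c < d} \<union> (\<lambda>r. (r,d)) ` {..<d}" by auto
  have fin: "finite {(r,c). r < c \<and> c < (d::nat)}"
    by (rule finite_subset[of _ "{..<d} \<times> {..<d}"]) auto
  have "card {(r,c). r < c \<and> c < Suc d} = card {(r,c). r < c \<and> c < d} + card ((\<lambda>r. (r,d)) ` {..<d})"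
    unfolding eq by (rule card_Un_disjoint) (use fin in auto)
  also have "card ((\<lambda>r. (r,d)) ` {..<d}) = d" by (subst card_image) (auto simp: inj_on_def)
  finally show ?case using Suc.IH by (cases d) (auto simp: algebra_simps)
qed


definition LL :: "complex mat list \<Rightarrow> nat \<Rightarrow> (nat \<Rightarrow> real) \<Rightarrow> nat \<Rightarrow> nat \<Rightarrow> complex" where
  "LL A g x r c = (\<Sum>i<g. complex_of_real (x i) * A ! i $$ (r,c))"

lemma LL_scale: "LL A g (\<lambda>i. x i / n) r c = LL A g x r c / complex_of_real n"
  unfolding LL_def by (simp add: sum_divide_distrib)

lemma LL_lin: "LL A g (\<lambda>i. s * x i + t * y i) r c = complex_of_real s * LL A g x r c + complex_of_real t * LL A g y r c"
  unfolding LL_def by (simp add: sum.distrib sum_distrib_left algebra_simps)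

lemma LL_diag:
  assumes "SM d g A" "r < d"
  shows "LL A g x r r = complex_of_real (\<Sum>i<g. x i * Re (A ! i $$ (r,r)))"
  unfolding LL_def of_real_sum
  by (intro sum.cong refl) (subst herm_diag_real[OF assms(1) _ assms(2)], auto)

lemma LL_OD:
  assumes SM: "SM d g A"
    and K: "\<forall>j\<in>{(r,c). r < c \<and> c < d} \<times> (UNIV :: bool set).
              (\<Sum>i<g. (case j of ((r,c),b) \<Rightarrow> if b then Re (A ! i $$ (r,c)) else Im (A ! i $$ (r,c))) * x i) = 0"
    and rc: "r < d" "c < d" "r \<noteq> c"
  shows "LL A g x r c = 0"
proof -
  have lt: "LL A g x r c = 0" if "r < c" "c < d" for r c
  proof -
    have "(\<Sum>i<g. Re (A ! i $$ (r,c)) * x i) = 0" using K[rule_format, of "((r,c),True)"] that by simp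
    moreover have "(\<Sum>i<g. Im (A ! i $$ (r,c)) * x i) = 0" using K[rule_format, of "((r,c),False)"] that by simp
    ultimately show ?thesis unfolding LL_def
      by (simp add: complex_eq_iff Re_sum Im_sum mult.commute)
  qed
  show ?thesis
  proof (cases "r < c")
    case True then show ?thesis using lt rc by auto
  next
    case False
    then have cr: "c < r" using rc by auto
    have "LL A g x r c = cnj (LL A g x c r)" unfolding LL_def cnj_sum
      by (intro sum.cong refl) (subst herm_entry[OF SM _ rc(1,2)], auto)
    then show ?thesis using lt[OF cr rc(1)] by simp
  qed
qed


lemma normalize_vec:
  fixes x :: "nat \<Rightarrow> real"
  assumes "\<exists>i<g. x i \<noteq> 0"
  shows "(\<Sum>i<g. (x i)\<^sup>2) > 0"
proof -
  obtain k where k: "k < g" "x k \<noteq> 0" using assms by auto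
  show ?thesis by (rule sum_pos2[of "{..<g}" k]) (use k in auto)
qed

lemma core:
  assumes SM: "SM d g A" and gbig: "d * (d - 1) + 2 \<le> g"
    and H1: "\<And>x. x \<in> spec1 A \<Longrightarrow> (\<Sum>i<g. (x!i)\<^sup>2) \<le> 1"
    and H2: "\<And>x. length x = g \<Longrightarrow> (\<Sum>i<g. (x!i)\<^sup>2) \<le> 1 \<Longrightarrow> x \<in> spec1 A"
  shows False
proof -
  have lenA: "length A = g" using SM unfolding SM_def by auto
  have g0: "g > 0" using gbig by auto
  have dimA: "dim_row (A ! 0) = d" using SM g0 unfolding SM_def by auto
  define P where "P = {(r,c). r < c \<and> c < (d::nat)}"
  define J0 where "J0 = P \<times> (UNIV :: bool set)"
  have finP: "finite P" unfolding P_def by (rule finite_subset[of _ "{..<d} \<times> {..<d}"]) auto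
  have finJ0: "finite J0" unfolding J0_def using finP by simp
  have cardJ0: "card J0 = d * (d - 1)" unfolding J0_def using card_pairs[of d] by (simp add: card_cartesian_product P_def)
  define cf :: "(nat \<times> nat) \<times> bool \<Rightarrow> nat \<Rightarrow> real" where
    "cf = (\<lambda>j i. case j of ((r,c),b) \<Rightarrow> if b then Re (A ! i $$ (r,c)) else Im (A ! i $$ (r,c)))"
  have OD: "LL A g x r c = 0" if "\<forall>j\<in>J0. (\<Sum>i<g. cf j i * x i) = 0" "r < d" "c < d" "r \<noteq> c" for x r c
    by (rule LL_OD[OF SM _ that(2-4)]) (use that(1) in \<open>simp add: J0_def P_def cf_def\<close>)
  obtain x where x: "\<forall>i. i \<notin> {..<g} \<longrightarrow> x i = 0" "\<exists>i\<in>{..<g}. x i \<noteq> 0" "\<forall>j\<in>J0. (\<Sum>i\<in>{..<g}. cf j i * x i) = 0"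
    using kernel_exists[OF finJ0, of "{..<g}" cf] cardJ0 gbig by auto
  define J1 where "J1 = insert None (Some ` J0)"
  define cf1 where "cf1 = (\<lambda>j i. case j of None \<Rightarrow> x i | Some j' \<Rightarrow> cf j' i)"
  have finJ1: "finite J1" unfolding J1_def using finJ0 by simp
  have cardJ1: "card J1 = d * (d - 1) + 1" unfolding J1_def using finJ0 cardJ0
    by (simp add: card_image)
  obtain y where y: "\<forall>i. i \<notin> {..<g} \<longrightarrow> y i = 0" "\<exists>i\<in>{..<g}. y i \<noteq> 0" "\<forall>j\<in>J1. (\<Sum>i\<in>{..<g}. cf1 j i * y i) = 0"
    using kernel_exists[OF finJ1, of "{..<g}" cf1] cardJ1 gbig by auto
  have yJ0: "\<forall>j\<in>J0. (\<Sum>i<g. cf j i * y i) = 0" using y(3) unfolding J1_def cf1_def by auto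
  have xy: "(\<Sum>i<g. x i * y i) = 0" using y(3) unfolding J1_def cf1_def by auto
  define nx where "nx = sqrt (\<Sum>i<g. (x i)\<^sup>2)"
  define ny where "ny = sqrt (\<Sum>i<g. (y i)\<^sup>2)"
  have sx: "(\<Sum>i<g. (x i)\<^sup>2) > 0" using x(2) normalize_vec[of g x] by auto
  have sy: "(\<Sum>i<g. (y i)\<^sup>2) > 0" using y(2) normalize_vec[of g y] by auto
  have nx: "nx > 0" "nx\<^sup>2 = (\<Sum>i<g. (x i)\<^sup>2)" unfolding nx_def using sx by auto
  have ny: "ny > 0" "ny\<^sup>2 = (\<Sum>i<g. (y i)\<^sup>2)" unfolding ny_def using sy by auto
  define X where "X = (\<lambda>i. x i / nx)"
  define Y where "Y = (\<lambda>i. y i / ny)"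
  have XX: "(\<Sum>i<g. (X i)\<^sup>2) = 1" unfolding X_def using nx sx
    by (simp add: power_divide sum_divide_distrib[symmetric])
  have YY: "(\<Sum>i<g. (Y i)\<^sup>2) = 1" unfolding Y_def using ny sy
    by (simp add: power_divide sum_divide_distrib[symmetric])
  have XY: "(\<Sum>i<g. X i * Y i) = 0" unfolding X_def Y_def using xy
    by (simp add: sum_divide_distrib[symmetric])
  have ODX: "LL A g X r c = 0" if "r < d" "c < d" "r \<noteq> c" for r c
    unfolding X_def LL_scale using OD[OF _ that] x(3) by simp
  have ODY: "LL A g Y r c = 0" if "r < d" "c < d" "r \<noteq> c" for r c
    unfolding Y_def LL_scale using OD[OF _ that] yJ0 by simp
  define a where "a = (\<lambda>r. \<Sum>i<g. X i * Re (A ! i $$ (r,r)))"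
  define b where "b = (\<lambda>r. \<Sum>i<g. Y i * Re (A ! i $$ (r,r)))"
  have key: "(\<forall>r<d. s * a r + t * b r \<le> 1) \<longleftrightarrow> s\<^sup>2 + t\<^sup>2 \<le> 1" for s t
  proof -
    define z where "z = map (\<lambda>i. s * X i + t * Y i) [0..<g]"
    have lz: "length z = g" unfolding z_def by simp
    have zi: "z ! i = s * X i + t * Y i" if "i < g" for i unfolding z_def using that by simp
    have nz: "(\<Sum>i<g. (z!i)\<^sup>2) = s\<^sup>2 + t\<^sup>2"
    proof -
      have "(\<Sum>i<g. (z!i)\<^sup>2) = (\<Sum>i<g. s\<^sup>2 * (X i)\<^sup>2 + 2 * s * t * (X i * Y i) + t\<^sup>2 * (Y i)\<^sup>2)"
        by (intro sum.cong refl) (simp add: zi power2_eq_square algebra_simps)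
      also have "\<dots> = s\<^sup>2 * (\<Sum>i<g. (X i)\<^sup>2) + 2 * s * t * (\<Sum>i<g. X i * Y i) + t\<^sup>2 * (\<Sum>i<g. (Y i)\<^sup>2)"
        by (simp add: sum.distrib sum_distrib_left)
      finally show ?thesis using XX YY XY by simp
    qed
    have mateq: "mat (dim_row (A ! 0)) (dim_row (A ! 0)) (\<lambda>(r,c). (if r = c then 1 else 0)
            - (\<Sum>i<length A. complex_of_real (z ! i) * A ! i $$ (r,c)))
       = mat d d (\<lambda>(r,c). if r = c then complex_of_real (1 - (s * a r + t * b r)) else 0)"
    proof (rule eq_matI)
      fix r c assume rc: "r < dim_row (mat d d (\<lambda>(r,c). if r = c then complex_of_real (1 - (s * a r + t * b r)) else 0))"
        "c < dim_col (mat d d (\<lambda>(r,c). if r = c then complex_of_real (1 - (s * a r + t * b r)) else 0))"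
      then have r: "r < d" and c: "c < d" by auto
      have "(\<Sum>i<length A. complex_of_real (z ! i) * A ! i $$ (r,c)) = LL A g (\<lambda>i. s * X i + t * Y i) r c"
        unfolding LL_def lenA by (intro sum.cong refl) (simp add: zi)
      also have "\<dots> = complex_of_real s * LL A g X r c + complex_of_real t * LL A g Y r c" by (rule LL_lin)
      finally have E: "(\<Sum>i<length A. complex_of_real (z ! i) * A ! i $$ (r,c)) = complex_of_real s * LL A g X r c + complex_of_real t * LL A g Y r c" .
      show "mat (dim_row (A ! 0)) (dim_row (A ! 0)) (\<lambda>(r,c). (if r = c then 1 else 0)
            - (\<Sum>i<length A. complex_of_real (z ! i) * A ! i $$ (r,c))) $$ (r,c)
       = mat d d (\<lambda>(r,c). if r = c then complex_of_real (1 - (s * a r + t * b r)) else 0) $$ (r,c)"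
      proof (cases "r = c")
        case True
        have "LL A g X r r = complex_of_real (a r)" unfolding a_def by (rule LL_diag[OF SM r])
        moreover have "LL A g Y r r = complex_of_real (b r)" unfolding b_def by (rule LL_diag[OF SM r])
        ultimately show ?thesis using E True r dimA by simp
      next
        case False
        then show ?thesis using E r c dimA ODX ODY by simp
      qed
    qed (use dimA in auto)
    have "z \<in> spec1 A \<longleftrightarrow> (\<forall>r<d. 0 \<le> 1 - (s * a r + t * b r))"
      unfolding spec1_def using lz lenA mateq diag_psd[of d "\<lambda>r. 1 - (s * a r + t * b r)"] by simp
    then have zs: "z \<in> spec1 A \<longleftrightarrow> (\<forall>r<d. s * a r + t * b r \<le> 1)" by simp
    show ?thesis
    proof
      assume "\<forall>r<d. s * a r + t * b r \<le> 1"
      then have "z \<in> spec1 A" using zs by simp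
      then show "s\<^sup>2 + t\<^sup>2 \<le> 1" using H1 nz by fastforce
    next
      assume "s\<^sup>2 + t\<^sup>2 \<le> 1"
      then have "z \<in> spec1 A" using H2[OF lz] nz by simp
      then show "\<forall>r<d. s * a r + t * b r \<le> 1" using zs by simp
    qed
  qed
  show False by (rule circle_false[OF key])
qed

lemma qf_pencil:
  fixes F :: "nat \<Rightarrow> nat \<Rightarrow> nat \<Rightarrow> complex"
  shows "(\<Sum>r<dim_row (mat N N (\<lambda>(r,c). (if r = c then 1 else 0) - (\<Sum>i<g. F i r c))).
          \<Sum>c<dim_row (mat N N (\<lambda>(r,c). (if r = c then 1 else 0) - (\<Sum>i<g. F i r c))).
          cnj (v r) * mat N N (\<lambda>(r,c). (if r = c then 1 else 0) - (\<Sum>i<g. F i r c)) $$ (r,c) * v c)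
       = (\<Sum>r<N. cnj (v r) * v r) - (\<Sum>i<g. \<Sum>r<N. \<Sum>c<N. cnj (v r) * F i r c * v c)"
proof -
  have "(\<Sum>r<dim_row (mat N N (\<lambda>(r,c). (if r = c then 1 else 0) - (\<Sum>i<g. F i r c))).
          \<Sum>c<dim_row (mat N N (\<lambda>(r,c). (if r = c then 1 else 0) - (\<Sum>i<g. F i r c))).
          cnj (v r) * mat N N (\<lambda>(r,c). (if r = c then 1 else 0) - (\<Sum>i<g. F i r c)) $$ (r,c) * v c)
      = (\<Sum>r<N. \<Sum>c<N. (if r = c then cnj (v r) * v c else 0) - (\<Sum>i<g. cnj (v r) * F i r c * v c))"
  proof (simp only: dim_row_mat, intro sum.cong refl)
    fix r c assume r: "r \<in> {..<N}" and c: "c \<in> {..<N}"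
    have "cnj (v r) * ((if r = c then 1 else 0) - (\<Sum>i<g. F i r c)) * v c
       = (if r = c then cnj (v r) * v c else 0) - cnj (v r) * (\<Sum>i<g. F i r c) * v c"
      by (simp add: algebra_simps)
    also have "cnj (v r) * (\<Sum>i<g. F i r c) * v c = (\<Sum>i<g. cnj (v r) * F i r c * v c)"
      by (simp add: sum_distrib_left sum_distrib_right)
    finally show "cnj (v r) * mat N N (\<lambda>(r,c). (if r = c then 1 else 0) - (\<Sum>i<g. F i r c)) $$ (r,c) * v c
       = (if r = c then cnj (v r) * v c else 0) - (\<Sum>i<g. cnj (v r) * F i r c * v c)"
      using r c by simp
  qed
  also have "\<dots> = (\<Sum>r<N. cnj (v r) * v r) - (\<Sum>r<N. \<Sum>c<N. \<Sum>i<g. cnj (v r) * F i r c * v c)"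
    by (simp add: sum_subtractf sum.delta)
  also have "(\<Sum>r<N. \<Sum>c<N. \<Sum>i<g. cnj (v r) * F i r c * v c) = (\<Sum>i<g. \<Sum>r<N. \<Sum>c<N. cnj (v r) * F i r c * v c)"
    by (simp add: sum.swap[of _ "{..<g}"])
  finally show ?thesis .
qed

lemma sum_reindex_divmod:
  fixes f :: "nat \<Rightarrow> 'a::comm_monoid_add"
  shows "(\<Sum>r<p*m. f r) = (\<Sum>a<p. \<Sum>b<m. f (a*m+b))"
proof -
  have "(\<Sum>r<p*m. f r) = (\<Sum>a<p. \<Sum>r\<in>{a*m..<a*m+m}. f r)" by (rule sum.nat_group[symmetric])
  also have "\<dots> = (\<Sum>a<p. \<Sum>b<m. f (a*m+b))"
  proof (rule sum.cong[OF refl])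
    fix a
    have "(\<Sum>r\<in>{a*m..<a*m+m}. f r) = (\<Sum>r\<in>{0 + a*m..<m + a*m}. f r)" by (simp add: add.commute)
    also have "\<dots> = (\<Sum>b\<in>{0..<m}. f (b + a*m))" by (rule sum.shift_bounds_nat_ivl)
    finally show "(\<Sum>r\<in>{a*m..<a*m+m}. f r) = (\<Sum>b<m. f (a*m+b))"
      by (simp add: atLeast0LessThan add.commute)
  qed
  finally show ?thesis .
qed

lemma herm_qf_real:
  assumes "hermitian B" "dim_row B = m"
  shows "(\<Sum>a<m. \<Sum>b<m. cnj (v a) * B $$ (a,b) * v b) = complex_of_real (Re (\<Sum>a<m. \<Sum>b<m. cnj (v a) * B $$ (a,b) * v b))"
proof -
  let ?q = "\<Sum>a<m. \<Sum>b<m. cnj (v a) * B $$ (a,b) * v b"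
  have "cnj ?q = (\<Sum>a<m. \<Sum>b<m. v a * B $$ (b,a) * cnj (v b))"
  proof -
    have hB: "\<forall>i<dim_row B. \<forall>j<dim_row B. B $$ (i,j) = cnj (B $$ (j,i))"
      using assms(1) unfolding hermitian_def by blast
    have h: "B $$ (a,b) = cnj (B $$ (b,a))" if "a < m" "b < m" for a b
      using hB that assms(2) by metis
    have h2: "cnj (B $$ (a,b)) = B $$ (b,a)" if "a < m" "b < m" for a b
      using h[OF that(2,1)] by simp
    show ?thesis unfolding cnj_sum by (intro sum.cong refl) (simp add: h2)
  qed
  also have "\<dots> = (\<Sum>b<m. \<Sum>a<m. v a * B $$ (b,a) * cnj (v b))" by (rule sum.swap)
  also have "\<dots> = ?q"
  proof (rule sum.cong[OF refl], rule sum.cong[OF refl])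
    fix a b
    show "v b * B $$ (a, b) * cnj (v a) = cnj (v a) * B $$ (a, b) * v b" by (simp only: mult_ac)
  qed
  finally have "cnj ?q = ?q" .
  then have "Im (cnj ?q) = Im ?q" by (rule arg_cong)
  then have "Im ?q = 0" by (simp only: cnj.sel)
  then show ?thesis by (intro complex_eqI) (simp only: Re_complex_of_real Im_complex_of_real)+
qed


lemma kron_qf:
  assumes B: "dim_row B = m" "dim_col B = m"
  shows "(\<Sum>r<m*m. \<Sum>c<m*m. cnj (v (r div m) * v (r mod m)) * kron B B $$ (r,c) * (v (c div m) * v (c mod m)))
       = (\<Sum>a<m. \<Sum>b<m. cnj (v a) * B $$ (a,b) * v b) * (\<Sum>a<m. \<Sum>b<m. cnj (v a) * B $$ (a,b) * v b)"
proof -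
  let ?t = "\<lambda>a a'. cnj (v a) * B $$ (a,a') * v a'"
  have K: "kron B B $$ (r,c) = B $$ (r div m, c div m) * B $$ (r mod m, c mod m)" if "r < m*m" "c < m*m" for r c
    using that B unfolding kron_def by simp
  have "(\<Sum>r<m*m. \<Sum>c<m*m. cnj (v (r div m) * v (r mod m)) * kron B B $$ (r,c) * (v (c div m) * v (c mod m)))
      = (\<Sum>a<m. \<Sum>b<m. \<Sum>c<m*m. cnj (v ((a*m+b) div m) * v ((a*m+b) mod m)) * kron B B $$ (a*m+b,c) * (v (c div m) * v (c mod m)))"
    by (rule sum_reindex_divmod)
  also have "\<dots> = (\<Sum>a<m. \<Sum>b<m. \<Sum>a'<m. \<Sum>b'<m. cnj (v ((a*m+b) div m) * v ((a*m+b) mod m)) * kron B B $$ (a*m+b,a'*m+b') * (v ((a'*m+b') div m) * v ((a'*m+b') mod m)))"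
    by (simp only: sum_reindex_divmod)
  also have "\<dots> = (\<Sum>a<m. \<Sum>b<m. \<Sum>a'<m. \<Sum>b'<m. ?t a a' * ?t b b')"
  proof (rule sum.cong[OF refl], rule sum.cong[OF refl], rule sum.cong[OF refl], rule sum.cong[OF refl])
    fix a b a' b' assume a: "a \<in> {..<m}" and b: "b \<in> {..<m}" and a': "a' \<in> {..<m}" and b': "b' \<in> {..<m}"
    have lt: "x*m+y < m*m" if "x < m" "y < m" for x y
    proof -
      have "x*m+y < (x+1)*m" using that by simp
      also have "(x+1)*m \<le> m*m" using that by (intro mult_le_mono1) simp
      finally show ?thesis .
    qed
    have lt1: "a*m+b < m*m" using a b lt by simp
    have lt2: "a'*m+b' < m*m" using a' b' lt by simp
    have d1: "(a*m+b) div m = a" "(a*m+b) mod m = b" using b by auto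
    have d2: "(a'*m+b') div m = a'" "(a'*m+b') mod m = b'" using b' by auto
    show "cnj (v ((a*m+b) div m) * v ((a*m+b) mod m)) * kron B B $$ (a*m+b,a'*m+b') * (v ((a'*m+b') div m) * v ((a'*m+b') mod m))
        = ?t a a' * ?t b b'"
      unfolding K[OF lt1 lt2] d1 d2 by (simp only: complex_cnj_mult mult_ac)
  qed
  also have "\<dots> = (\<Sum>a<m. \<Sum>a'<m. ?t a a') * (\<Sum>b<m. \<Sum>b'<m. ?t b b')"
    by (simp add: sum_product)
  finally show ?thesis .
qed

lemma norm_sq_kron:
  fixes m :: nat
  shows
  "(\<Sum>r<m*m. cnj (v (r div m) * v (r mod m)) * (v (r div m) * v (r mod m)))
   = (\<Sum>a<m. cnj (v a) * v a) * (\<Sum>a<m. cnj (v a) * v a)"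
proof -
  have "(\<Sum>r<m*m. cnj (v (r div m) * v (r mod m)) * (v (r div m) * v (r mod m)))
     = (\<Sum>a<m. \<Sum>b<m. cnj (v ((a*m+b) div m) * v ((a*m+b) mod m)) * (v ((a*m+b) div m) * v ((a*m+b) mod m)))"
    by (rule sum_reindex_divmod)
  also have "\<dots> = (\<Sum>a<m. \<Sum>b<m. (cnj (v a) * v a) * (cnj (v b) * v b))"
  proof (rule sum.cong[OF refl], rule sum.cong[OF refl])
    fix a b assume b: "b \<in> {..<m}"
    have d1: "(a*m+b) div m = a" "(a*m+b) mod m = b" using b by auto
    show "cnj (v ((a*m+b) div m) * v ((a*m+b) mod m)) * (v ((a*m+b) div m) * v ((a*m+b) mod m)) = (cnj (v a) * v a) * (cnj (v b) * v b)"
      unfolding d1 by (simp only: complex_cnj_mult mult_ac)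
  qed
  also have "\<dots> = (\<Sum>a<m. cnj (v a) * v a) * (\<Sum>a<m. cnj (v a) * v a)"
    by (simp add: sum_product)
  finally show ?thesis .
qed


lemma cs_le:
  fixes a b :: "nat \<Rightarrow> real"
  assumes "(\<Sum>i<g. (a i)\<^sup>2) \<le> 1" "(\<Sum>i<g. (b i)\<^sup>2) \<le> N\<^sup>2" "0 \<le> N"
  shows "(\<Sum>i<g. a i * b i) \<le> N"
proof -
  have "(\<Sum>i<g. a i * b i)\<^sup>2 \<le> (\<Sum>i<g. (a i)\<^sup>2) * (\<Sum>i<g. (b i)\<^sup>2)" by (rule Cauchy_Schwarz_ineq_sum)
  also have "\<dots> \<le> 1 * N\<^sup>2"
  proof (rule mult_mono)
    show "0 \<le> (\<Sum>i<g. (b i)\<^sup>2)" by (intro sum_nonneg) simp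
  qed (use assms in auto)
  finally have "(\<Sum>i<g. a i * b i)\<^sup>2 \<le> N\<^sup>2" by simp
  then show ?thesis using assms(3) by (rule power2_le_imp_le)
qed

definition X1 :: "real list \<Rightarrow> complex mat list" where
  "X1 x = map (\<lambda>r. mat 1 1 (\<lambda>_. complex_of_real r)) x"

lemma SM_X1: "length x = g \<Longrightarrow> SM 1 g (X1 x)"
  unfolding SM_def hermitian_def X1_def by auto

lemma X1_nth: "i < length x \<Longrightarrow> X1 x ! i = mat 1 1 (\<lambda>_. complex_of_real (x ! i))"
  unfolding X1_def by simp

lemma pencil_A_X1:
  assumes SM: "SM d g A" and g0: "g > 0" and lx: "length x = g"
  shows "pencil A (X1 x) = mat d d (\<lambda>(r,c). (if r = c then 1 else 0) - (\<Sum>i<g. complex_of_real (x ! i) * A ! i $$ (r,c)))"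
proof -
  have lenA: "length A = g" and Ai: "\<And>i. i < g \<Longrightarrow> A ! i \<in> carrier_mat d d" using SM unfolding SM_def by auto
  have d0: "dim_row (A ! 0) = d" using Ai[OF g0] by auto
  have x0: "dim_row (X1 x ! 0) = 1" using X1_nth[of 0 x] lx g0 by simp
  show ?thesis unfolding pencil_def Let_def d0 x0 lenA
  proof (rule eq_matI)
    fix r c assume rc: "r < dim_row (mat d d (\<lambda>(r,c). (if r = c then 1 else 0) - (\<Sum>i<g. complex_of_real (x ! i) * A ! i $$ (r,c))))"
      "c < dim_col (mat d d (\<lambda>(r,c). (if r = c then 1 else 0) - (\<Sum>i<g. complex_of_real (x ! i) * A ! i $$ (r,c))))"
    then have r: "r < d" and c: "c < d" by auto
    have "kron (A ! i) (X1 x ! i) $$ (r,c) = complex_of_real (x ! i) * A ! i $$ (r,c)" if i: "i < g" for i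
      using Ai[OF i] r c i lx unfolding kron_def by (simp add: X1_nth)
    then show "mat (d * 1) (d * 1) (\<lambda>(r,c). (if r = c then 1 else 0) - (\<Sum>i<g. kron (A ! i) (X1 x ! i) $$ (r,c))) $$ (r,c)
       = mat d d (\<lambda>(r,c). (if r = c then 1 else 0) - (\<Sum>i<g. complex_of_real (x ! i) * A ! i $$ (r,c))) $$ (r,c)"
      using r c by simp
  qed auto
qed

lemma spec1_iff_free:
  assumes SM: "SM d g A" and g0: "g > 0" and lx: "length x = g"
  shows "x \<in> spec1 A \<longleftrightarrow> (1, X1 x) \<in> free_spec A"
proof -
  have lenA: "length A = g" and Ai: "\<And>i. i < g \<Longrightarrow> A ! i \<in> carrier_mat d d" using SM unfolding SM_def by auto
  have d0: "dim_row (A ! 0) = d" using Ai[OF g0] by auto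
  show ?thesis unfolding spec1_def free_spec_def using SM_X1[OF lx] pencil_A_X1[OF SM g0 lx] lenA d0 lx by simp
qed

lemma pencil_X1_X1:
  assumes g0: "g > 0" and lx: "length x = g"
  shows "pencil (X1 x) (X1 x) = mat 1 1 (\<lambda>_. 1 - complex_of_real (\<Sum>i<g. (x ! i)\<^sup>2))"
proof -
  have x0: "dim_row (X1 x ! 0) = 1" using X1_nth[of 0 x] lx g0 by simp
  have lX: "length (X1 x) = g" using lx unfolding X1_def by simp
  show ?thesis unfolding pencil_def Let_def x0 lX
  proof (rule eq_matI)
    fix r c assume "r < dim_row (mat 1 1 (\<lambda>_. 1 - complex_of_real (\<Sum>i<g. (x ! i)\<^sup>2)))"
       "c < dim_col (mat 1 1 (\<lambda>_. 1 - complex_of_real (\<Sum>i<g. (x ! i)\<^sup>2)))"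
    then have r: "r = 0" "c = 0" by auto
    have "kron (X1 x ! i) (X1 x ! i) $$ (0,0) = complex_of_real ((x ! i)\<^sup>2)" if i: "i < g" for i
      using i lx unfolding kron_def by (simp add: X1_nth power2_eq_square)
    then show "mat (1 * 1) (1 * 1) (\<lambda>(r,c). (if r = c then 1 else 0) - (\<Sum>i<g. kron (X1 x ! i) (X1 x ! i) $$ (r,c))) $$ (r,c)
      = mat 1 1 (\<lambda>_. 1 - complex_of_real (\<Sum>i<g. (x ! i)\<^sup>2)) $$ (r,c)"
      using r by simp
  qed auto
qed

lemma pencil_Y_X1:
  assumes SMY: "SM m g Y" and g0: "g > 0" and lx: "length x = g"
  shows "pencil Y (X1 x) = mat m m (\<lambda>(r,c). (if r = c then 1 else 0) - (\<Sum>i<g. Y ! i $$ (r,c) * complex_of_real (x ! i)))"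
proof -
  have lenY: "length Y = g" and Yi: "\<And>i. i < g \<Longrightarrow> Y ! i \<in> carrier_mat m m" using SMY unfolding SM_def by auto
  have m0: "dim_row (Y ! 0) = m" using Yi[OF g0] by auto
  have x0: "dim_row (X1 x ! 0) = 1" using X1_nth[of 0 x] lx g0 by simp
  show ?thesis unfolding pencil_def Let_def m0 x0 lenY
  proof (rule eq_matI)
    fix r c assume rc: "r < dim_row (mat m m (\<lambda>(r,c). (if r = c then 1 else 0) - (\<Sum>i<g. Y ! i $$ (r,c) * complex_of_real (x ! i))))"
      "c < dim_col (mat m m (\<lambda>(r,c). (if r = c then 1 else 0) - (\<Sum>i<g. Y ! i $$ (r,c) * complex_of_real (x ! i))))"
    then have r: "r < m" and c: "c < m" by auto
    have "kron (Y ! i) (X1 x ! i) $$ (r,c) = Y ! i $$ (r,c) * complex_of_real (x ! i)" if i: "i < g" for i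
      using Yi[OF i] r c i lx unfolding kron_def by (simp add: X1_nth)
    then show "mat (m * 1) (m * 1) (\<lambda>(r,c). (if r = c then 1 else 0) - (\<Sum>i<g. kron (Y ! i) (X1 x ! i) $$ (r,c))) $$ (r,c)
       = mat m m (\<lambda>(r,c). (if r = c then 1 else 0) - (\<Sum>i<g. Y ! i $$ (r,c) * complex_of_real (x ! i))) $$ (r,c)"
      using r c by simp
  qed auto
qed

lemma pencil_Y_Y:
  assumes SMY: "SM m g Y" and g0: "g > 0"
  shows "pencil Y Y = mat (m*m) (m*m) (\<lambda>(r,c). (if r = c then 1 else 0) - (\<Sum>i<g. kron (Y ! i) (Y ! i) $$ (r,c)))"
proof -
  have lenY: "length Y = g" and Yi: "\<And>i. i < g \<Longrightarrow> Y ! i \<in> carrier_mat m m" using SMY unfolding SM_def by auto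
  have m0: "dim_row (Y ! 0) = m" using Yi[OF g0] by auto
  show ?thesis unfolding pencil_def Let_def m0 lenY ..
qed


lemma free_H2:
  assumes SM: "SM d g A" and g0: "g > 0"
    and FE: "free_spec A = free_polar g (free_spec A)"
    and lx: "length x = g" and xn: "(\<Sum>i<g. (x ! i)\<^sup>2) \<le> 1"
  shows "x \<in> spec1 A"
proof -
  have lenA: "length A = g" using SM unfolding SM_def by auto
  have P: "psd (pencil Y (X1 x))" if mY: "(m, Y) \<in> free_spec A" for m Y
  proof -
    have SMY: "SM m g Y" using mY unfolding free_spec_def using lenA by auto
    have lenY: "length Y = g" and Yi: "\<And>i. i < g \<Longrightarrow> Y ! i \<in> carrier_mat m m"
      and Yh: "\<And>i. i < g \<Longrightarrow> hermitian (Y ! i)" using SMY unfolding SM_def by auto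
    have "(m, Y) \<in> free_polar g (free_spec A)" using mY FE by simp
    then have pYY: "psd (pencil Y Y)" using mY unfolding free_polar_def by blast
    define M where "M = mat m m (\<lambda>(r,c). (if r = c then 1 else 0) - (\<Sum>i<g. Y ! i $$ (r,c) * complex_of_real (x ! i)))"
    have pe: "pencil Y (X1 x) = M" unfolding M_def by (rule pencil_Y_X1[OF SMY g0 lx])
    have herm: "hermitian M"
      unfolding hermitian_def M_def
    proof (intro conjI allI impI)
      fix r c assume r: "r < dim_row (mat m m (\<lambda>(r,c). (if r = c then 1 else 0) - (\<Sum>i<g. Y ! i $$ (r,c) * complex_of_real (x ! i))))"
        and c: "c < dim_row (mat m m (\<lambda>(r,c). (if r = c then 1 else 0) - (\<Sum>i<g. Y ! i $$ (r,c) * complex_of_real (x ! i))))"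
      have r': "r < m" and c': "c < m" using r c by auto
      have "(\<Sum>i<g. Y ! i $$ (r,c) * complex_of_real (x ! i)) = cnj (\<Sum>i<g. Y ! i $$ (c,r) * complex_of_real (x ! i))"
        unfolding cnj_sum by (intro sum.cong refl) (simp add: herm_entry[OF SMY _ r' c'])
      then show "mat m m (\<lambda>(r,c). (if r = c then 1 else 0) - (\<Sum>i<g. Y ! i $$ (r,c) * complex_of_real (x ! i))) $$ (r,c)
        = cnj (mat m m (\<lambda>(r,c). (if r = c then 1 else 0) - (\<Sum>i<g. Y ! i $$ (r,c) * complex_of_real (x ! i))) $$ (c,r))"
        using r' c' by simp
    qed simp
    have "0 \<le> Re (\<Sum>r<dim_row M. \<Sum>c<dim_row M. cnj (v r) * M $$ (r,c) * v c)" for v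
    proof -
      define q where "q = (\<lambda>i. \<Sum>a<m. \<Sum>b<m. cnj (v a) * Y ! i $$ (a,b) * v b)"
      define N2 where "N2 = (\<Sum>a<m. (cmod (v a))\<^sup>2)"
      have N2c: "(\<Sum>a<m. cnj (v a) * v a) = complex_of_real N2"
        unfolding N2_def of_real_sum by (intro sum.cong refl) (subst complex_norm_square, simp add: mult.commute)
      have N2p: "0 \<le> N2" unfolding N2_def by (intro sum_nonneg) simp
      have qr: "q i = complex_of_real (Re (q i))" if "i < g" for i
        unfolding q_def by (rule herm_qf_real[OF Yh[OF that]]) (use Yi[OF that] in auto)
      define u where "u = (\<lambda>r. v (r div m) * v (r mod m))"
      have "0 \<le> Re (\<Sum>r<dim_row (pencil Y Y). \<Sum>c<dim_row (pencil Y Y). cnj (u r) * pencil Y Y $$ (r,c) * u c)"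
        using pYY unfolding psd_def by blast
      also have "(\<Sum>r<dim_row (pencil Y Y). \<Sum>c<dim_row (pencil Y Y). cnj (u r) * pencil Y Y $$ (r,c) * u c)
          = (\<Sum>r<m*m. cnj (u r) * u r) - (\<Sum>i<g. \<Sum>r<m*m. \<Sum>c<m*m. cnj (u r) * kron (Y ! i) (Y ! i) $$ (r,c) * u c)"
        unfolding pencil_Y_Y[OF SMY g0] by (rule qf_pencil)
      also have "(\<Sum>r<m*m. cnj (u r) * u r) = complex_of_real N2 * complex_of_real N2"
        unfolding u_def norm_sq_kron N2c ..
      also have "(\<Sum>i<g. \<Sum>r<m*m. \<Sum>c<m*m. cnj (u r) * kron (Y ! i) (Y ! i) $$ (r,c) * u c) = (\<Sum>i<g. q i * q i)"
      proof (rule sum.cong[OF refl])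
        fix i assume i: "i \<in> {..<g}"
        show "(\<Sum>r<m*m. \<Sum>c<m*m. cnj (u r) * kron (Y ! i) (Y ! i) $$ (r,c) * u c) = q i * q i"
          unfolding u_def q_def by (rule kron_qf) (use Yi i in auto)
      qed
      also have "(\<Sum>i<g. q i * q i) = complex_of_real (\<Sum>i<g. (Re (q i))\<^sup>2)"
        unfolding of_real_sum
      proof (rule sum.cong[OF refl])
        fix i assume "i \<in> {..<g}"
        then have "q i = complex_of_real (Re (q i))" using qr by simp
        then have "q i * q i = complex_of_real (Re (q i)) * complex_of_real (Re (q i))" by metis
        then show "q i * q i = complex_of_real ((Re (q i))\<^sup>2)" by (simp add: power2_eq_square)
      qed
      finally have "0 \<le> Re (complex_of_real N2 * complex_of_real N2 - complex_of_real (\<Sum>i<g. (Re (q i))\<^sup>2))" .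
      then have qb: "(\<Sum>i<g. (Re (q i))\<^sup>2) \<le> N2\<^sup>2" by (simp add: power2_eq_square)
      have cs: "(\<Sum>i<g. x ! i * Re (q i)) \<le> N2" by (rule cs_le[OF xn qb N2p])
      have "(\<Sum>r<dim_row M. \<Sum>c<dim_row M. cnj (v r) * M $$ (r,c) * v c)
          = (\<Sum>r<m. cnj (v r) * v r) - (\<Sum>i<g. \<Sum>r<m. \<Sum>c<m. cnj (v r) * (Y ! i $$ (r,c) * complex_of_real (x ! i)) * v c)"
        unfolding M_def by (rule qf_pencil)
      also have "(\<Sum>i<g. \<Sum>r<m. \<Sum>c<m. cnj (v r) * (Y ! i $$ (r,c) * complex_of_real (x ! i)) * v c)
          = (\<Sum>i<g. complex_of_real (x ! i) * q i)"
      proof (rule sum.cong[OF refl])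
        fix i
        show "(\<Sum>r<m. \<Sum>c<m. cnj (v r) * (Y ! i $$ (r,c) * complex_of_real (x ! i)) * v c) = complex_of_real (x ! i) * q i"
          unfolding q_def sum_distrib_left by (intro sum.cong refl) (simp only: mult_ac)
      qed
      also have "(\<Sum>i<g. complex_of_real (x ! i) * q i) = complex_of_real (\<Sum>i<g. x ! i * Re (q i))"
        unfolding of_real_sum by (intro sum.cong refl) (subst qr, simp, simp)
      finally have "Re (\<Sum>r<dim_row M. \<Sum>c<dim_row M. cnj (v r) * M $$ (r,c) * v c) = N2 - (\<Sum>i<g. x ! i * Re (q i))"
        using N2c by simp
      then show ?thesis using cs by simp
    qed
    then show "psd (pencil Y (X1 x))" unfolding pe psd_def using herm by blast
  qed
  have "(1, X1 x) \<in> free_polar g (free_spec A)"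
    unfolding free_polar_def using SM_X1[OF lx] P by auto
  then have "(1, X1 x) \<in> free_spec A" using FE by simp
  then show ?thesis using spec1_iff_free[OF SM g0 lx] by simp
qed

lemma free_H1:
  assumes SM: "SM d g A" and g0: "g > 0"
    and FE: "free_spec A = free_polar g (free_spec A)"
    and x: "x \<in> spec1 A"
  shows "(\<Sum>i<g. (x ! i)\<^sup>2) \<le> 1"
proof -
  have lenA: "length A = g" using SM unfolding SM_def by auto
  have lx: "length x = g" using x lenA unfolding spec1_def by auto
  have m: "(1, X1 x) \<in> free_spec A" using spec1_iff_free[OF SM g0 lx] x by simp
  then have "(1, X1 x) \<in> free_polar g (free_spec A)" using FE by simp
  then have "psd (pencil (X1 x) (X1 x))" using m unfolding free_polar_def by blast
  then have p: "psd (mat 1 1 (\<lambda>_. 1 - complex_of_real (\<Sum>i<g. (x ! i)\<^sup>2)))" using pencil_X1_X1[OF g0 lx] by simp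
  have all: "\<forall>v. 0 \<le> Re (\<Sum>i<dim_row (mat 1 1 (\<lambda>_. 1 - complex_of_real (\<Sum>i<g. (x ! i)\<^sup>2))).
        \<Sum>j<dim_row (mat 1 1 (\<lambda>_. 1 - complex_of_real (\<Sum>i<g. (x ! i)\<^sup>2))).
        cnj (v i) * mat 1 1 (\<lambda>_. 1 - complex_of_real (\<Sum>i<g. (x ! i)\<^sup>2)) $$ (i,j) * v j)"
    using p unfolding psd_def by blast
  show ?thesis using spec[OF all, of "\<lambda>_. 1"] by simp
qed


theorem mainTheorem20:
  fixes d g :: nat and A :: "complex mat list"
  assumes "d \<ge> 3"
    and "d\<^sup>2 - d + 2 \<le> g" and "g \<le> d\<^sup>2 - 1"
    and "SM d g A"
    and "free_bounded (free_spec A)"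
  shows "spec1 A \<noteq> polar_R g (spec1 A) \<and> free_spec A \<noteq> free_polar g (free_spec A)"
proof -
  have SM: "SM d g A" by (rule assms(4))
  have dd: "d * (d - 1) + 2 \<le> g" using assms(2) by (simp add: power2_eq_square diff_mult_distrib2)
  have g0: "g > 0" using dd by simp
  have c1: "spec1 A \<noteq> polar_R g (spec1 A)"
  proof
    assume E: "spec1 A = polar_R g (spec1 A)"
    have H1: "(\<Sum>i<g. (x ! i)\<^sup>2) \<le> 1" if x: "x \<in> spec1 A" for x
    proof -
      have "x \<in> polar_R g (spec1 A)" using x E by simp
      then show ?thesis using x unfolding polar_R_def by (simp add: power2_eq_square)
    qed
    have H2: "x \<in> spec1 A" if lx: "length x = g" and xn: "(\<Sum>i<g. (x ! i)\<^sup>2) \<le> 1" for x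
    proof -
      have "(\<Sum>i<g. x ! i * y ! i) \<le> 1" if y: "y \<in> spec1 A" for y
        using cs_le[where a="\<lambda>i. x ! i" and b="\<lambda>i. y ! i" and N=1 and g=g] xn H1[OF y] by simp
      then have "x \<in> polar_R g (spec1 A)" unfolding polar_R_def using lx by simp
      then show ?thesis using E by simp
    qed
    show False by (rule core[OF SM dd H1 H2])
  qed
  have c2: "free_spec A \<noteq> free_polar g (free_spec A)"
  proof
    assume FE: "free_spec A = free_polar g (free_spec A)"
    show False by (rule core[OF SM dd free_H1[OF SM g0 FE] free_H2[OF SM g0 FE]])
  qed
  show ?thesis using c1 c2 by simp
qed

end
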